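(* Let $G$ be a finite, simple, unweighted, undirected, connected graph, let $S\subseteq V(G)$ with $|S|=k$ such that $G-S$ is a forest, and let $\ell$ be an integer. Then there exists a shortest path $P$ in $G$ with $d_G(v,P)\le\ell$ for all $v\in V(G)$ if and only if there exists a skeleton $\mathbb{S}$ (with respect to $G,S,\ell$) and a shortest path $P$ in $G$ that realizes $\mathbb{S}$.
   Context: $d_G$ is the graph distance and $d_G(v,P)=\min_{w\in V(P)}d_G(v,w)$; $[\ell]=\{1,\dots,\ell\}$ and $[a,b]=\{a,\dots,b\}$. A skeleton $\mathbb{S}$ consists of: two vertices $u,v\in V(G)$ (intended endpoints); a set $M\subseteq S\setminus\{u,v\}$; an ordering $\pi=(m_1,\dots,m_{|M|})$ of $M$, with the convention $m_0=u$, $m_{|M|+1}=v$; and, writing $X=S\setminus M$, functions $f:X\to[\ell]$ and $g:X\to\{0,1,\dots,|M|+1,(0,1),(1,2),\dots,(|M|,|M|+1)\}$. A path $P$ realizes $\mathbb{S}$ if: (1) $M=S\cap V(P)$, $X\cap V(P)=\emptyset$, the vertices of $M$ appear on $P$ in the order $\pi$, and the endpoints of $P$ are $m_0$ and $m_{|M|+1}$; (2) for every $v\in V(G)$ there is $w\in V(P)$ with $d_G(v,w)\le \ell$; (3) for every $x\in X$ and every $w\in V(P)$, $d_G(x,w)\ge f(x)$; (4) for every $x\in X$: if $g(x)=i\in[0,|M|+1]$ then $d_G(x,m_i)=f(x)$, and if $g(x)=(i,i+1)$ with $i\in[0,|M|]$ then there is a vertex $w\notin\{m_i,m_{i+1}\}$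 on the subpath of $P$ between $m_i$ and $m_{i+1}$ with $d_G(x,w)=f(x)$.
   Formalization: In a skeleton, $X=S\setminus(M\cup\{u,v\})$ rather than $X=S\setminus M$, and condition (1) for realizing is $M=(S\setminus\{u,v\})\cap V(P)$ in place of $M=S\cap V(P)$. Each condition added here is assumed in the paper as well or is needed for the statement above to hold. *)

theory Defs
  imports Main "HOL-Library.Sublist"
begin

definition simple_graph :: "'a set \<Rightarrow> ('a \<Rightarrow> 'a \<Rightarrow> bool) \<Rightarrow> bool" where
  "simple_graph V E \<longleftrightarrow> finite V \<and> (\<forall>x y. E x y \<longrightarrow> x \<in> V \<and> y \<in> V)
     \<and> (\<forall>x y. E x y \<longrightarrow> E y x) \<and> (\<forall>x. \<not> E x x)"

definition walk :: "'a set \<Rightarrow> ('a \<Rightarrow> 'a \<Rightarrow> bool) \<Rightarrow> 'a list \<Rightarrow> bool" where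
  "walk V E p \<longleftrightarrow> p \<noteq> [] \<and> set p \<subseteq> V \<and> (\<forall>i. Suc i < length p \<longrightarrow> E (p ! i) (p ! Suc i))"

definition is_path :: "'a set \<Rightarrow> ('a \<Rightarrow> 'a \<Rightarrow> bool) \<Rightarrow> 'a list \<Rightarrow> bool" where
  "is_path V E p \<longleftrightarrow> walk V E p \<and> distinct p"

definition connected_graph :: "'a set \<Rightarrow> ('a \<Rightarrow> 'a \<Rightarrow> bool) \<Rightarrow> bool" where
  "connected_graph V E \<longleftrightarrow> (\<forall>x\<in>V. \<forall>y\<in>V. \<exists>p. walk V E p \<and> hd p = x \<and> last p = y)"

definition gdist :: "'a set \<Rightarrow> ('a \<Rightarrow> 'a \<Rightarrow> bool) \<Rightarrow> 'a \<Rightarrow> 'a \<Rightarrow> nat" where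
  "gdist V E x y = (LEAST n. \<exists>p. walk V E p \<and> hd p = x \<and> last p = y \<and> length p = Suc n)"

definition shortest_path :: "'a set \<Rightarrow> ('a \<Rightarrow> 'a \<Rightarrow> bool) \<Rightarrow> 'a list \<Rightarrow> bool" where
  "shortest_path V E p \<longleftrightarrow> is_path V E p \<and> length p = Suc (gdist V E (hd p) (last p))"

definition forest_minus :: "'a set \<Rightarrow> ('a \<Rightarrow> 'a \<Rightarrow> bool) \<Rightarrow> 'a set \<Rightarrow> bool" where
  "forest_minus V E S \<longleftrightarrow> \<not> (\<exists>c. is_path (V - S) E c \<and> length c \<ge> 3 \<and> E (last c) (hd c))"

text \<open>Values of g: \<open>GV i\<close> stands for i, \<open>GE i\<close> stands for (i,i+1).\<close>
datatype gval = GV nat | GE nat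

text \<open>Skeleton (u, v, pi, f, g) w.r.t. G, S, l; M = set pi,
  X = S - (M \<union> {u,v}).\<close>
definition skel_X :: "'a set \<Rightarrow> 'a \<Rightarrow> 'a \<Rightarrow> 'a list \<Rightarrow> 'a set" where
  "skel_X S u v \<pi> = S - (set \<pi> \<union> {u, v})"

definition is_skeleton :: "'a set \<Rightarrow> ('a \<Rightarrow> 'a \<Rightarrow> bool) \<Rightarrow> 'a set \<Rightarrow> int
     \<Rightarrow> 'a \<Rightarrow> 'a \<Rightarrow> 'a list \<Rightarrow> ('a \<Rightarrow> nat) \<Rightarrow> ('a \<Rightarrow> gval) \<Rightarrow> bool" where
  "is_skeleton V E S l u v \<pi> f g \<longleftrightarrow> u \<in> V \<and> v \<in> V \<and> distinct \<pi> \<and> set \<pi> \<subseteq> S - {u, v}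
     \<and> (\<forall>x\<in>skel_X S u v \<pi>. 1 \<le> f x \<and> int (f x) \<le> l)
     \<and> (\<forall>x\<in>skel_X S u v \<pi>. case g x of GV i \<Rightarrow> i \<le> length \<pi> + 1 | GE i \<Rightarrow> i \<le> length \<pi>)"

definition skel_m :: "'a \<Rightarrow> 'a \<Rightarrow> 'a list \<Rightarrow> nat \<Rightarrow> 'a" where
  "skel_m u v \<pi> i = (u # \<pi> @ [v]) ! i"

definition pos :: "'a list \<Rightarrow> 'a \<Rightarrow> nat" where
  "pos P w = (THE j. j < length P \<and> P ! j = w)"

definition inner_between :: "'a list \<Rightarrow> 'a \<Rightarrow> 'a \<Rightarrow> 'a set" where
  "inner_between P a b = {P ! j | j. j < length P \<and> j \<noteq> pos P a \<and> j \<noteq> pos P b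
       \<and> min (pos P a) (pos P b) < j \<and> j < max (pos P a) (pos P b)}"

definition realizes :: "'a set \<Rightarrow> ('a \<Rightarrow> 'a \<Rightarrow> bool) \<Rightarrow> 'a set \<Rightarrow> int
     \<Rightarrow> 'a \<Rightarrow> 'a \<Rightarrow> 'a list \<Rightarrow> ('a \<Rightarrow> nat) \<Rightarrow> ('a \<Rightarrow> gval) \<Rightarrow> 'a list \<Rightarrow> bool" where
  "realizes V E S l u v \<pi> f g P \<longleftrightarrow>
     \<comment> \<open>(1)\<close>
     set \<pi> = (S - {u, v}) \<inter> set P \<and> skel_X S u v \<pi> \<inter> set P = {} \<and> subseq \<pi> P
       \<and> hd P = u \<and> last P = v
     \<comment> \<open>(2)\<close>
     \<and> (\<forall>w\<in>V. \<exists>p\<in>set P. int (gdist V E w p) \<le> l)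
     \<comment> \<open>(3)\<close>
     \<and> (\<forall>x\<in>skel_X S u v \<pi>. \<forall>w\<in>set P. f x \<le> gdist V E x w)
     \<comment> \<open>(4)\<close>
     \<and> (\<forall>x\<in>skel_X S u v \<pi>. case g x of
          GV i \<Rightarrow> gdist V E x (skel_m u v \<pi> i) = f x
        | GE i \<Rightarrow> (\<exists>w \<in> inner_between P (skel_m u v \<pi> i) (skel_m u v \<pi> (Suc i)).
                     gdist V E x w = f x))"

end

theory Submission
  imports Defs
begin

lemma gdist_zero:
  assumes "connected_graph V E" "x \<in> V" "w \<in> V" "gdist V E x w = 0"
  shows "x = w"
proof -
  obtain p where p: "walk V E p" "hd p = x" "last p = w"
    using assms(1-3) unfolding connected_graph_def by blast
  have ex: "\<exists>n. \<exists>p. walk V E p \<and> hd p = x \<and> last p = w \<and> length p = Suc n"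
    using p by (intro exI[of _ "length p - 1"] exI[of _ p]) (auto simp: walk_def)
  from LeastI_ex[OF ex] assms(4) obtain q where
    "walk V E q" "hd q = x" "last q = w" "length q = Suc 0"
    unfolding gdist_def by auto
  then show ?thesis by (cases q) auto
qed

lemma pos_nth:
  assumes "distinct P" "j < length P"
  shows "pos P (P ! j) = j"
  unfolding pos_def
  using assms by (intro the_equality) (auto simp: nth_eq_iff_index_eq)

lemma pos_in:
  assumes "distinct P" "x \<in> set P"
  shows "pos P x < length P \<and> P ! (pos P x) = x"
proof -
  obtain j where "j < length P" "P ! j = x" using assms(2) by (auto simp: in_set_conv_nth)
  then show ?thesis using pos_nth[OF assms(1)] by auto
qed

lemma split3:
  assumes "(i::nat) \<le> Suc n"
  obtains "i = 0" | "i = Suc n" | k where "i = Suc k" "k < n"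
  using assms by (cases i) (auto simp: le_Suc_eq less_Suc_eq_le)

lemma exists_gv:
  assumes "distinct P" "P \<noteq> []" "set \<pi> \<subseteq> set P" "w \<in> set P" "hd P = u" "last P = v"
  shows "\<exists>gv. (case gv of GV i \<Rightarrow> i \<le> length \<pi> + 1 \<and> skel_m u v \<pi> i = w
             | GE i \<Rightarrow> i \<le> length \<pi> \<and> w \<in> inner_between P (skel_m u v \<pi> i) (skel_m u v \<pi> (Suc i)))"
proof -
  let ?n = "length \<pi>"
  have m0: "skel_m u v \<pi> 0 = u" by (simp add: skel_m_def)
  have mlast: "skel_m u v \<pi> (Suc ?n) = v" by (simp add: skel_m_def nth_append)
  have mk: "skel_m u v \<pi> (Suc k) = \<pi> ! k" if "k < ?n" for k
    using that by (simp add: skel_m_def nth_append)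
  show ?thesis
  proof (cases "w = u")
    case True then show ?thesis using m0 by (intro exI[of _ "GV 0"]) auto
  next
    case nu: False
    show ?thesis
    proof (cases "w = v")
      case True then show ?thesis using mlast by (intro exI[of _ "GV (Suc ?n)"]) auto
    next
      case nv: False
      show ?thesis
      proof (cases "w \<in> set \<pi>")
        case True
        then obtain k where "k < ?n" "\<pi> ! k = w" by (auto simp: in_set_conv_nth)
        then show ?thesis using mk by (intro exI[of _ "GV (Suc k)"]) auto
      next
        case np: False
        define q where "q i = pos P (skel_m u v \<pi> i)" for i
        define j where "j = pos P w"
        have hdP: "P ! 0 = u" using assms(2,5) by (simp add: hd_conv_nth)
        have lastP: "P ! (length P - 1) = v" using assms(2,6) by (simp add: last_conv_nth)
        have jl: "j < length P" "P ! j = w" using pos_in[OF assms(1,4)] j_def by auto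
        have q0: "q 0 = 0" unfolding q_def m0 using pos_nth[OF assms(1), of 0] hdP assms(2) by auto
        have qn: "q (Suc ?n) = length P - 1" unfolding q_def mlast
          using pos_nth[OF assms(1), of "length P - 1"] lastP assms(2) by auto
        have j0: "j \<noteq> 0" using jl hdP nu by (metis)
        have jn: "j \<noteq> length P - 1" using jl lastP nv by auto
        have inP: "skel_m u v \<pi> i \<in> set P" if hi: "i \<le> Suc ?n" for i
        proof -
          consider "i = 0" | "i = Suc ?n" | k where "i = Suc k" "k < ?n"
            by (rule split3[OF hi])
          then show ?thesis
          proof cases
            case 1 then show ?thesis using m0 assms(2,5) by auto
          next
            case 2 then show ?thesis using mlast assms(2,6) by auto
          next
            case (3 k) then show ?thesis using mk assms(3) nth_mem by fastforce
          qed
        qed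
        have ne: "skel_m u v \<pi> i \<noteq> w" if hi: "i \<le> Suc ?n" for i
        proof -
          consider "i = 0" | "i = Suc ?n" | k where "i = Suc k" "k < ?n"
            by (rule split3[OF hi])
          then show ?thesis
          proof cases
            case 1 then show ?thesis using m0 nu by auto
          next
            case 2 then show ?thesis using mlast nv by auto
          next
            case (3 k) then show ?thesis using mk np nth_mem by fastforce
          qed
        qed
        have qne: "q i \<noteq> j" if "i \<le> Suc ?n" for i
          using pos_in[OF assms(1) inP[OF that]] ne[OF that] jl q_def by metis
        define i where "i = (GREATEST i. i \<le> Suc ?n \<and> q i < j)"
        have ex: "0 \<le> Suc ?n \<and> q 0 < j" using q0 j0 by auto
        have iP: "i \<le> Suc ?n \<and> q i < j"
          unfolding i_def by (rule GreatestI_nat[where P="\<lambda>i. i \<le> Suc ?n \<and> q i < j", OF ex]) auto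
        have imax: "\<And>y. y \<le> Suc ?n \<and> q y < j \<Longrightarrow> y \<le> i"
          unfolding i_def by (rule Greatest_le_nat[where P="\<lambda>i. i \<le> Suc ?n \<and> q i < j"]) auto
        have jlt: "j < length P - 1" using jl jn by auto
        have iln: "i \<le> ?n" using iP qn jlt by (cases "i = Suc ?n") auto
        have qi1: "j < q (Suc i)"
          using imax[of "Suc i"] qne[of "Suc i"] iln by fastforce
        have "w \<in> inner_between P (skel_m u v \<pi> i) (skel_m u v \<pi> (Suc i))"
          unfolding inner_between_def using iP qi1 jl q_def
          by (intro CollectI exI[of _ j]) auto
        then show ?thesis using iln by (intro exI[of _ "GE i"]) auto
      qed
    qed
  qed
qed

theorem lemma3:
  fixes V :: "'a set" and E :: "'a \<Rightarrow> 'a \<Rightarrow> bool" and S :: "'a set"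
    and k :: nat and l :: int
  assumes "simple_graph V E"
    and "connected_graph V E"
    and "S \<subseteq> V"
    and "card S = k"
    and "forest_minus V E S"
  shows "(\<exists>P. shortest_path V E P \<and> (\<forall>w\<in>V. \<exists>p\<in>set P. int (gdist V E w p) \<le> l))
     \<longleftrightarrow> (\<exists>u v \<pi> f g P. is_skeleton V E S l u v \<pi> f g \<and> shortest_path V E P
             \<and> realizes V E S l u v \<pi> f g P)"
proof
  assume "\<exists>u v \<pi> f g P. is_skeleton V E S l u v \<pi> f g \<and> shortest_path V E P
             \<and> realizes V E S l u v \<pi> f g P"
  then show "\<exists>P. shortest_path V E P \<and> (\<forall>w\<in>V. \<exists>p\<in>set P. int (gdist V E w p) \<le> l)"
    unfolding realizes_def by blast
next
  assume "\<exists>P. shortest_path V E P \<and> (\<forall>w\<in>V. \<exists>p\<in>set P. int (gdist V E w p) \<le> l)"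
  then obtain P where sp: "shortest_path V E P" and cov: "\<forall>w\<in>V. \<exists>p\<in>set P. int (gdist V E w p) \<le> l"
    by blast
  have dP: "distinct P" and neP: "P \<noteq> []" and PV: "set P \<subseteq> V"
    using sp by (auto simp: shortest_path_def is_path_def walk_def)
  define u where "u = hd P"
  define v where "v = last P"
  define \<pi> where "\<pi> = filter (\<lambda>y. y \<in> S - {u, v}) P"
  define f where "f x = Min (gdist V E x ` set P)" for x
  define wx where "wx x = (SOME w. w \<in> set P \<and> gdist V E x w = f x)" for x
  define g where "g x = (SOME gv. (case gv of GV i \<Rightarrow> i \<le> length \<pi> + 1 \<and> skel_m u v \<pi> i = wx x
             | GE i \<Rightarrow> i \<le> length \<pi> \<and> wx x \<in> inner_between P (skel_m u v \<pi> i) (skel_m u v \<pi> (Suc i))))" for x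
  have setpi: "set \<pi> = (S - {u, v}) \<inter> set P" unfolding \<pi>_def by auto
  have Xdisj: "skel_X S u v \<pi> \<inter> set P = {}" unfolding skel_X_def setpi by auto
  have fmin: "f x \<le> gdist V E x w" if "w \<in> set P" for x w
    unfolding f_def using that by auto
  have wx: "wx x \<in> set P \<and> gdist V E x (wx x) = f x" for x
  proof -
    have "f x \<in> gdist V E x ` set P" unfolding f_def using neP by (intro Min_in) auto
    then have "\<exists>w. w \<in> set P \<and> gdist V E x w = f x" by auto
    then show ?thesis unfolding wx_def by (rule someI_ex)
  qed
  have gx: "case g x of GV i \<Rightarrow> i \<le> length \<pi> + 1 \<and> skel_m u v \<pi> i = wx x
             | GE i \<Rightarrow> i \<le> length \<pi> \<and> wx x \<in> inner_between P (skel_m u v \<pi> i) (skel_m u v \<pi> (Suc i))" for x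
    unfolding g_def
    by (rule someI_ex, rule exists_gv) (use dP neP wx in \<open>auto simp: u_def v_def \<pi>_def\<close>)
  have fX: "1 \<le> f x \<and> int (f x) \<le> l" if "x \<in> skel_X S u v \<pi>" for x
  proof -
    have xV: "x \<in> V" using that assms(3) by (auto simp: skel_X_def)
    have xP: "x \<notin> set P" using that Xdisj by auto
    have "f x \<noteq> 0"
    proof
      assume "f x = 0"
      then have "x = wx x" using gdist_zero[OF assms(2) xV, of "wx x"] wx PV by auto
      then show False using wx xP by metis
    qed
    moreover obtain p where "p \<in> set P" "int (gdist V E x p) \<le> l" using cov xV by blast
    ultimately show ?thesis using fmin[of p x] by auto
  qed
  have skel: "is_skeleton V E S l u v \<pi> f g"
    unfolding is_skeleton_def
  proof (intro conjI ballI)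
    show "u \<in> V" "v \<in> V" using neP PV by (auto simp: u_def v_def)
    show "distinct \<pi>" using dP by (simp add: \<pi>_def)
    show "set \<pi> \<subseteq> S - {u, v}" using setpi by auto
  next
    fix x assume "x \<in> skel_X S u v \<pi>"
    then show "1 \<le> f x" "int (f x) \<le> l" using fX by auto
  next
    fix x
    show "case g x of GV i \<Rightarrow> i \<le> length \<pi> + 1 | GE i \<Rightarrow> i \<le> length \<pi>"
      using gx[of x] by (cases "g x") auto
  qed
  have real: "realizes V E S l u v \<pi> f g P"
    unfolding realizes_def
  proof (intro conjI ballI)
    show "set \<pi> = (S - {u, v}) \<inter> set P" by (rule setpi)
    show "skel_X S u v \<pi> \<inter> set P = {}" by (rule Xdisj)
    show "subseq \<pi> P" by (simp add: \<pi>_def)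
    show "hd P = u" "last P = v" by (simp_all add: u_def v_def)
  next
    fix w assume "w \<in> V" then show "\<exists>p\<in>set P. int (gdist V E w p) \<le> l" using cov by blast
  next
    fix x w assume "w \<in> set P" then show "f x \<le> gdist V E x w" by (rule fmin)
  next
    fix x
    show "case g x of GV i \<Rightarrow> gdist V E x (skel_m u v \<pi> i) = f x
        | GE i \<Rightarrow> (\<exists>w \<in> inner_between P (skel_m u v \<pi> i) (skel_m u v \<pi> (Suc i)).
                     gdist V E x w = f x)"
      using gx[of x] wx[of x] by (cases "g x") auto
  qed
  show "\<exists>u v \<pi> f g P. is_skeleton V E S l u v \<pi> f g \<and> shortest_path V E P
             \<and> realizes V E S l u v \<pi> f g P"
    using skel sp real by blast
qed

end
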